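(* Let $s>1$, $\zeta(s)=\sum_{k=1}^\infty k^{-s}$, let $a_k=\frac{k^{-s}}{\zeta(s)}$ ($k\in\mathbb{N}$), and let $K$ be the associated generalized Cantor set. Then there are constants $c_1,c_2>0$ such that $$\frac{c_1}{(\ln(e/t))^{s-1}}\le |K(t)|\le \frac{c_2}{(\ln(e/t))^{s-1}}\quad\text{for all } t\in(0,1].$$
   Context: Generalized Cantor set for positive $(a_k)$ with $\sum a_k=1$: $K_0=[0,1]$; recursively $K_n$ is obtained from $K_{n-1}$ (a union of $2^{n-1}$ disjoint closed intervals) by removing from each of its intervals the open centered subinterval of length $a_n2^{-(n-1)}$; $K=\bigcap_n K_n$. For $t>0$, $K(t)=\{x\in\mathbb{R}:\operatorname{dist}(x,K)<t\}$ and $|\cdot|$ is Lebesgue measure. *)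

theory Defs
  imports "HOL-Analysis.Analysis"
begin

text \<open>Closed intervals [l,r] (as pairs) of the n-th stage K_n of the generalized Cantor set
  for a sequence a (indexed from 1; a 0 is unused).\<close>
fun cantor_intervals :: "(nat \<Rightarrow> real) \<Rightarrow> nat \<Rightarrow> (real \<times> real) set" where
  "cantor_intervals a 0 = {(0, 1)}"
| "cantor_intervals a (Suc n) =
     (\<Union>(l, r) \<in> cantor_intervals a n.
        let m = (l + r) / 2; g = a (Suc n) / 2 ^ n in
        {(l, m - g / 2), (m + g / 2, r)})"

definition cantor_stage :: "(nat \<Rightarrow> real) \<Rightarrow> nat \<Rightarrow> real set" where
  "cantor_stage a n = (\<Union>(l, r) \<in> cantor_intervals a n. {l..r})"

definition gen_cantor :: "(nat \<Rightarrow> real) \<Rightarrow> real set" where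
  "gen_cantor a = (\<Inter>n. cantor_stage a n)"

definition nbhd :: "real set \<Rightarrow> real \<Rightarrow> real set" where
  "nbhd K t = {x. infdist x K < t}"

definition zeta_real :: "real \<Rightarrow> real" where
  "zeta_real s = (\<Sum>k. (real (Suc k)) powr (- s))"

end

theory Submission
  imports Defs
begin


lemma mvt_step:
  fixes s x :: real
  assumes s: "s > 1" and x: "x \<ge> 1"
  shows "(x+1) powr (-s) \<le> (x powr (1-s) - (x+1) powr (1-s)) / (s-1)"
proof -
  have "\<exists>z. x < z \<and> z < x+1 \<and> ((x+1) powr (1-s) - x powr (1-s) = ((x+1) - x) * ((1-s) * z powr (-s)))"
  proof (rule MVT2)
    fix y assume "x \<le> y" "y \<le> x+1"
    then have "y > 0" using x by simp
    show "DERIV (\<lambda>y. y powr (1-s)) y :> (1-s) * y powr (-s)"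
      using has_real_derivative_powr[OF \<open>y>0\<close>, of "1-s"] by simp
  qed simp
  then obtain z where z: "x < z" "z < x+1" "(x+1) powr (1-s) - x powr (1-s) = (1-s) * z powr (-s)" by auto
  have "(x+1) powr (-s) \<le> z powr (-s)"
    using z x s by (intro powr_mono2') auto
  then have "(s-1) * (x+1) powr (-s) \<le> (s-1) * z powr (-s)"
    using s by (intro mult_left_mono) auto
  also have "\<dots> = x powr (1-s) - (x+1) powr (1-s)" using z(3) by (simp add: algebra_simps)
  finally show ?thesis using s by (simp add: pos_le_divide_eq mult.commute)
qed

lemma summ: "s > 1 \<Longrightarrow> summable (\<lambda>k. real (Suc k) powr (-s))"
proof -
  assume "s > 1"
  then have "summable (\<lambda>n. real n powr (-s))" by (simp add: summable_real_powr_iff)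
  then show ?thesis using summable_Suc_iff[of "\<lambda>n. real n powr (-s)"] by simp
qed

lemma summ_shift: "s > 1 \<Longrightarrow> summable (\<lambda>j. real (j + m) powr (-s))"
proof -
  assume "s > 1"
  then have "summable (\<lambda>n. real n powr (-s))" by (simp add: summable_real_powr_iff)
  then show ?thesis using summable_iff_shift[of "\<lambda>n. real n powr (-s)" m] by simp
qed

lemma tele:
  fixes s :: real assumes s: "s > 1" and m: "m \<ge> 1"
  shows "(\<Sum>j<N. real (m+1+j) powr (-s)) \<le> (real m powr (1-s) - real (m+N) powr (1-s)) / (s-1)"
proof (induction N)
  case 0 then show ?case by simp
next
  case (Suc N)
  have "real (m+1+N) powr (-s) \<le> (real (m+N) powr (1-s) - real (m+N+1) powr (1-s)) / (s-1)"
    using mvt_step[OF s, of "real (m+N)"] m by (simp add: add_ac)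
  moreover have "(real m powr (1-s) - real (m+N) powr (1-s)) / (s-1) + (real (m+N) powr (1-s) - real (m+N+1) powr (1-s)) / (s-1)
     = (real m powr (1-s) - real (m+Suc N) powr (1-s)) / (s-1)"
    by (simp add: diff_divide_distrib)
  moreover have "(\<Sum>j<Suc N. real (m+1+j) powr (-s)) = (\<Sum>j<N. real (m+1+j) powr (-s)) + real (m+1+N) powr (-s)"
    by simp
  ultimately show ?case using Suc.IH by linarith
qed

lemma tail_upper:
  fixes s :: real assumes s: "s > 1"
  shows "(\<Sum>j. real (j+n+1) powr (-s)) \<le> s/(s-1) * real (n+1) powr (1-s)"
proof (rule suminf_le_const)
  show "summable (\<lambda>j. real (j+n+1) powr (-s))" using summ_shift[OF s, of "n+1"] by (simp add: add_ac)
  fix N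
  have pos: "0 \<le> s/(s-1) * real (n+1) powr (1-s)" using s by simp
  show "(\<Sum>j<N. real (j+n+1) powr (-s)) \<le> s/(s-1) * real (n+1) powr (1-s)"
  proof (cases N)
    case 0 then show ?thesis using pos by simp
  next
    case (Suc M)
    have "(\<Sum>j<N. real (j+n+1) powr (-s)) = real (n+1) powr (-s) + (\<Sum>j<M. real (n+1+1+j) powr (-s))"
      unfolding Suc sum.lessThan_Suc_shift by (simp add: add_ac)
    also have "\<dots> \<le> real (n+1) powr (-s) + (real (n+1) powr (1-s) - real (n+1+M) powr (1-s)) / (s-1)"
      using tele[OF s, of "n+1" M] by simp
    also have "\<dots> \<le> real (n+1) powr (1-s) + real (n+1) powr (1-s) / (s-1)"
    proof -
      have "real (n+1) powr (-s) \<le> real (n+1) powr (1-s)" by (intro powr_mono) auto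
      moreover have "0 \<le> real (n+1+M) powr (1-s) / (s-1)" using s by simp
      ultimately show ?thesis by (simp add: diff_divide_distrib)
    qed
    also have "\<dots> = s/(s-1) * real (n+1) powr (1-s)" using s by (simp add: field_simps)
    finally show ?thesis .
  qed
qed

lemma tail_lower:
  fixes s :: real assumes s: "s > 1"
  shows "2 powr (-s) * real (n+1) powr (1-s) \<le> (\<Sum>j. real (j+n+1) powr (-s))"
proof -
  have sm: "summable (\<lambda>j. real (j+n+1) powr (-s))" using summ_shift[OF s, of "n+1"] by (simp add: add_ac)
  have "(\<Sum>j<n+1. real (2*(n+1)) powr (-s)) \<le> (\<Sum>j<n+1. real (j+n+1) powr (-s))"
    using s by (intro sum_mono powr_mono2') auto
  also have "\<dots> \<le> (\<Sum>j. real (j+n+1) powr (-s))"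
    by (rule sum_le_suminf[OF sm]) auto
  also have "(\<Sum>j<n+1. real (2*(n+1)) powr (-s)) = 2 powr (-s) * real (n+1) powr (1-s)"
  proof -
    have "(\<Sum>j<n+1. real (2*(n+1)) powr (-s)) = real (n+1) * (2 powr (-s) * real (n+1) powr (-s))"
      using powr_mult[of 2 "real(n+1)" "-s"] by simp
    also have "\<dots> = 2 powr (-s) * real (n+1) powr (1-s)"
      by (simp add: powr_diff powr_minus field_simps)
    finally show ?thesis .
  qed
  finally show ?thesis .
qed



definition LL :: "(nat \<Rightarrow> real) \<Rightarrow> nat \<Rightarrow> real" where
  "LL a n = (1 - (\<Sum>k=1..n. a k)) / 2^n"

lemma ci_suc: "cantor_intervals a (Suc n) = (\<Union>p\<in>cantor_intervals a n.
   {(fst p, (fst p + snd p)/2 - a (Suc n) / 2^n / 2), ((fst p + snd p)/2 + a (Suc n) / 2^n / 2, snd p)})"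
  by (auto simp: Let_def split: prod.splits)

lemma ci_left: "p \<in> cantor_intervals a n \<Longrightarrow> (fst p, (fst p + snd p)/2 - a (Suc n) / 2^n / 2) \<in> cantor_intervals a (Suc n)"
  unfolding ci_suc by (rule UN_I) auto

lemma ci_right: "p \<in> cantor_intervals a n \<Longrightarrow> ((fst p + snd p)/2 + a (Suc n) / 2^n / 2, snd p) \<in> cantor_intervals a (Suc n)"
  unfolding ci_suc by (rule UN_I) auto

lemma ci_finite: "finite (cantor_intervals a n) \<and> card (cantor_intervals a n) \<le> 2^n"
proof (induction n)
  case 0 then show ?case by simp
next
  case (Suc n)
  let ?A = "\<lambda>p. {(fst p, (fst p + snd p)/2 - a (Suc n) / 2^n / 2), ((fst p + snd p)/2 + a (Suc n) / 2^n / 2, snd p)}"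
  have "card (\<Union>p\<in>cantor_intervals a n. ?A p) \<le> (\<Sum>p\<in>cantor_intervals a n. card (?A p))"
    using Suc by (intro card_UN_le) auto
  also have "\<dots> \<le> (\<Sum>p\<in>cantor_intervals a n. 2)"
    by (intro sum_mono) (auto simp: card_insert_if)
  also have "\<dots> \<le> 2 ^ Suc n" using Suc by simp
  finally show ?case using Suc unfolding ci_suc by auto
qed

lemma ci_len: "p \<in> cantor_intervals a n \<Longrightarrow> snd p - fst p = LL a n"
proof (induction n arbitrary: p)
  case 0 then show ?case by (simp add: LL_def)
next
  case (Suc n)
  then obtain q where q: "q \<in> cantor_intervals a n"
    and p: "p = (fst q, (fst q + snd q)/2 - a (Suc n) / 2^n / 2) \<or> p = ((fst q + snd q)/2 + a (Suc n) / 2^n / 2, snd q)"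
    unfolding ci_suc by auto
  have IH: "snd q - fst q = LL a n" using Suc.IH q by simp
  have "LL a (Suc n) = (LL a n - a (Suc n) / 2^n) / 2"
    by (simp add: LL_def field_simps)
  then show ?case using p IH by (auto simp: field_simps)
qed

lemma ci_persist: "(l, r) \<in> cantor_intervals a n \<Longrightarrow> \<exists>r'. (l, r') \<in> cantor_intervals a (n + k)"
proof (induction k)
  case 0 then show ?case by auto
next
  case (Suc k)
  then obtain r' where r': "(l, r') \<in> cantor_intervals a (n + k)" by auto
  then have "(l, (l + r')/2 - a (Suc (n+k)) / 2^(n+k) / 2) \<in> cantor_intervals a (Suc (n + k))"
    unfolding ci_suc by force
  then show ?case by auto
qed

lemma LL_nonneg: assumes "\<And>n. (\<Sum>k=1..n. a k) \<le> 1" shows "LL a n \<ge> 0"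
  using assms[of n] by (simp add: LL_def)

lemma mid_aux: "(l::real) \<le> r \<Longrightarrow> c \<ge> 0 \<Longrightarrow> (l+r)/2 - c \<le> r \<and> l \<le> (l+r)/2 + c"
  by (auto simp: field_simps)

lemma cs_dec:
  assumes nn: "\<And>k. a k \<ge> 0" and le1: "\<And>n. (\<Sum>k=1..n. a k) \<le> 1"
  shows "cantor_stage a (Suc n) \<subseteq> cantor_stage a n"
proof
  fix x assume "x \<in> cantor_stage a (Suc n)"
  then obtain q where q: "q \<in> cantor_intervals a n"
    and x: "x \<in> {fst q .. (fst q + snd q)/2 - a (Suc n) / 2^n / 2} \<or> x \<in> {(fst q + snd q)/2 + a (Suc n) / 2^n / 2 .. snd q}"
    unfolding cantor_stage_def ci_suc by fastforce
  have "snd q - fst q \<ge> 0" using ci_len[OF q] LL_nonneg[OF le1] by simp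
  moreover have c0: "a (Suc n) / 2^n / 2 \<ge> 0" using nn by simp
  ultimately have h: "(fst q + snd q)/2 - a (Suc n) / 2^n / 2 \<le> snd q" "fst q \<le> (fst q + snd q)/2 + a (Suc n) / 2^n / 2"
    using mid_aux[of "fst q" "snd q" "a (Suc n) / 2^n / 2"] by auto
  have "x \<in> {fst q .. snd q}" using x
  proof
    assume "x \<in> {fst q .. (fst q + snd q)/2 - a (Suc n) / 2^n / 2}" then show ?thesis using h(1) by simp
  next
    assume "x \<in> {(fst q + snd q)/2 + a (Suc n) / 2^n / 2 .. snd q}" then show ?thesis using h(2) by simp
  qed
  then show "x \<in> cantor_stage a n" using q unfolding cantor_stage_def by force
qed

lemma left_in_K:
  assumes nn: "\<And>k. a k \<ge> 0" and le1: "\<And>n. (\<Sum>k=1..n. a k) \<le> 1"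
    and lr: "(l, r) \<in> cantor_intervals a n"
  shows "l \<in> gen_cantor a"
proof -
  have dec: "decseq (cantor_stage a)" by (intro decseq_SucI cs_dec[OF nn le1])
  have "l \<in> cantor_stage a m" if "m \<ge> n" for m
  proof -
    obtain r' where r': "(l, r') \<in> cantor_intervals a (n + (m - n))" using ci_persist[OF lr] by blast
    have "r' - l \<ge> 0" using ci_len[OF r'] LL_nonneg[OF le1] by simp
    then show ?thesis using r' that unfolding cantor_stage_def by force
  qed
  then have "l \<in> cantor_stage a m" for m
  proof (cases "m \<le> n")
    case True
    then have "cantor_stage a n \<subseteq> cantor_stage a m" using decseqD[OF dec True] by simp
    then show ?thesis using \<open>\<And>m. m \<ge> n \<Longrightarrow> l \<in> cantor_stage a m\<close>[of n] by auto
  next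
    case False then show ?thesis using \<open>\<And>m. m \<ge> n \<Longrightarrow> l \<in> cantor_stage a m\<close>[of m] by auto
  qed
  then show ?thesis by (simp add: gen_cantor_def)
qed



lemma meas_Icc: "(l::real) \<le> u \<Longrightarrow> measure lebesgue {l..u} = u - l"
  by simp

lemma UN_Icc_lmeas:
  fixes f g :: "'i \<Rightarrow> real"
  assumes "finite I" shows "(\<Union>i\<in>I. {f i..g i}) \<in> lmeasurable"
proof (rule bounded_set_imp_lmeasurable)
  show "bounded (\<Union>i\<in>I. {f i..g i})" using assms by (intro bounded_UN) auto
  show "(\<Union>i\<in>I. {f i..g i}) \<in> sets lebesgue" using assms by (intro sets.finite_UN) auto
qed

lemma UN_Icc_meas:
  fixes f g :: "'i \<Rightarrow> real"
  assumes "finite I" "\<And>i. i \<in> I \<Longrightarrow> f i \<le> g i"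
  shows "measure lebesgue (\<Union>i\<in>I. {f i..g i}) \<le> (\<Sum>i\<in>I. g i - f i)"
proof -
  have "measure lebesgue (\<Union>i\<in>I. {f i..g i}) \<le> (\<Sum>i\<in>I. measure lebesgue {f i..g i})"
    using assms by (intro measure_UNION_le) auto
  also have "\<dots> = (\<Sum>i\<in>I. g i - f i)" using assms(2) by (intro sum.cong) auto
  finally show ?thesis .
qed

lemma cs_union: "cantor_stage a n = (\<Union>p\<in>cantor_intervals a n. {fst p..snd p})"
  by (simp add: cantor_stage_def case_prod_beta)

lemma cs_lmeas: "cantor_stage a n \<in> lmeasurable"
  unfolding cs_union using ci_finite by (intro UN_Icc_lmeas) auto

lemma cs_measure:
  assumes nn: "\<And>k. a k \<ge> 0" and le1: "\<And>n. (\<Sum>k=1..n. a k) \<le> 1"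
  shows "measure lebesgue (cantor_stage a n) \<ge> 1 - (\<Sum>k=1..n. a k)"
proof (induction n)
  case 0 then show ?case by (simp add: cantor_stage_def)
next
  case (Suc n)
  define g where "g = a (Suc n) / 2^n"
  define G where "G = (\<Union>p\<in>cantor_intervals a n. {(fst p + snd p)/2 - g/2 .. (fst p + snd p)/2 + g/2})"
  have g0: "g \<ge> 0" using nn by (simp add: g_def)
  have fin: "finite (cantor_intervals a n)" and card: "card (cantor_intervals a n) \<le> 2^n"
    using ci_finite by auto
  have Glm: "G \<in> lmeasurable" unfolding G_def using fin by (intro UN_Icc_lmeas) 
  have "measure lebesgue G \<le> (\<Sum>p\<in>cantor_intervals a n. g)"
    unfolding G_def using UN_Icc_meas[OF fin, of "\<lambda>p. (fst p + snd p)/2 - g/2" "\<lambda>p. (fst p + snd p)/2 + g/2"] g0 by simp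
  also have "\<dots> = card (cantor_intervals a n) * g" by simp
  also have "\<dots> \<le> 2^n * g" using card g0 by (intro mult_right_mono) (auto simp flip: of_nat_power)
  also have "\<dots> = a (Suc n)" by (simp add: g_def)
  finally have mG: "measure lebesgue G \<le> a (Suc n)" .
  have sub: "cantor_stage a n \<subseteq> cantor_stage a (Suc n) \<union> G"
  proof
    fix x assume "x \<in> cantor_stage a n"
    then obtain p where p: "p \<in> cantor_intervals a n" "x \<in> {fst p..snd p}" unfolding cs_union by auto
    let ?m = "(fst p + snd p)/2"
    show "x \<in> cantor_stage a (Suc n) \<union> G"
    proof (cases "x \<le> ?m - g/2")
      case True
      then have xi: "x \<in> {fst p .. ?m - g/2}" using p by auto
      have mi: "(fst p, ?m - g/2) \<in> cantor_intervals a (Suc n)"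
        unfolding g_def by (rule ci_left[OF p(1)])
      have "x \<in> cantor_stage a (Suc n)" unfolding cs_union[of a "Suc n"]
        by (rule UN_I[OF mi]) (use xi in simp)
      then show ?thesis by blast
    next
      case F1: False
      show ?thesis
      proof (cases "x \<ge> ?m + g/2")
        case True
        then have xi: "x \<in> {?m + g/2 .. snd p}" using p by auto
        have mi: "(?m + g/2, snd p) \<in> cantor_intervals a (Suc n)"
          unfolding g_def by (rule ci_right[OF p(1)])
        have "x \<in> cantor_stage a (Suc n)" unfolding cs_union[of a "Suc n"]
          by (rule UN_I[OF mi]) (use xi in simp)
        then show ?thesis by blast
      next
        case False
        then have "x \<in> {?m - g/2 .. ?m + g/2}" using F1 by auto
        then have "x \<in> G" using p(1) unfolding G_def by blast
        then show ?thesis by blast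
      qed
    qed
  qed
  have "measure lebesgue (cantor_stage a n) \<le> measure lebesgue (cantor_stage a (Suc n) \<union> G)"
    using sub fmeasurableD[OF cs_lmeas[of a n]] fmeasurable.Un[OF cs_lmeas[of a "Suc n"] Glm]
    by (rule measure_mono_fmeasurable)
  also have "\<dots> \<le> measure lebesgue (cantor_stage a (Suc n)) + measure lebesgue G"
    using fmeasurableD[OF cs_lmeas[of a "Suc n"]] fmeasurableD[OF Glm] by (rule measure_Un_le)
  moreover have "(\<Sum>k=1..Suc n. a k) = (\<Sum>k=1..n. a k) + a (Suc n)"
    by (simp only: sum.cl_ivl_Suc) simp
  ultimately show ?case using Suc.IH mG by linarith
qed



context
  fixes a :: "nat \<Rightarrow> real"
  assumes nn: "\<And>k. a k \<ge> 0" and le1: "\<And>n. (\<Sum>k=1..n. a k) \<le> 1"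
begin

lemma K_sub: "gen_cantor a \<subseteq> cantor_stage a n"
  unfolding gen_cantor_def by auto

lemma K_ne: "0 \<in> gen_cantor a"
  using left_in_K[OF nn le1, of 0 1 0] by simp

lemma nbhd_sub:
  assumes t: "t > 0"
  shows "nbhd (gen_cantor a) t \<subseteq> (\<Union>p\<in>cantor_intervals a n. {fst p - t .. snd p + t})"
proof
  fix x assume "x \<in> nbhd (gen_cantor a) t"
  then have "infdist x (gen_cantor a) < t" by (simp add: nbhd_def)
  moreover have ne: "gen_cantor a \<noteq> {}" using K_ne by auto
  ultimately have "(INF y\<in>gen_cantor a. dist x y) < t" using infdist_notempty[OF ne, of x] by simp
  then obtain y where y: "y \<in> gen_cantor a" "dist x y < t"
    using ne by (subst (asm) cINF_less_iff) (auto intro: bdd_belowI2[where m=0])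
  then have "y \<in> cantor_stage a n" using K_sub by auto
  then obtain p where p: "p \<in> cantor_intervals a n" "y \<in> {fst p..snd p}" unfolding cs_union by auto
  have "x \<in> {fst p - t .. snd p + t}" using p(2) y(2) by (auto simp: dist_real_def)
  then show "x \<in> (\<Union>p\<in>cantor_intervals a n. {fst p - t .. snd p + t})" using p(1) by blast
qed

lemma nbhd_lmeas:
  assumes t: "t > 0"
  shows "nbhd (gen_cantor a) t \<in> lmeasurable"
proof (rule lmeasurable_open)
  show "open (nbhd (gen_cantor a) t)" unfolding nbhd_def
    by (intro open_Collect_less continuous_intros)
  have "bounded (\<Union>p\<in>cantor_intervals a 0. {fst p - t .. snd p + t})"
    using ci_finite[of a 0] by (intro bounded_UN) auto
  then show "bounded (nbhd (gen_cantor a) t)" using nbhd_sub[OF t, of 0] bounded_subset by blast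
qed

lemma nbhd_upper:
  assumes t: "t > 0"
  shows "measure lebesgue (nbhd (gen_cantor a) t) \<le> 2^n * (LL a n + 2*t)"
proof -
  have fin: "finite (cantor_intervals a n)" and card: "card (cantor_intervals a n) \<le> 2^n"
    using ci_finite by auto
  have "measure lebesgue (nbhd (gen_cantor a) t) \<le> measure lebesgue (\<Union>p\<in>cantor_intervals a n. {fst p - t .. snd p + t})"
    using nbhd_sub[OF t] fmeasurableD[OF nbhd_lmeas[OF t]] UN_Icc_lmeas[OF fin]
    by (rule measure_mono_fmeasurable)
  also have "\<dots> \<le> (\<Sum>p\<in>cantor_intervals a n. (snd p + t) - (fst p - t))"
  proof (rule UN_Icc_meas[OF fin])
    fix p assume "p \<in> cantor_intervals a n"
    then have "snd p - fst p = LL a n" by (rule ci_len)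
    then show "fst p - t \<le> snd p + t" using LL_nonneg[OF le1, of n] t by simp
  qed
  also have "\<dots> = (\<Sum>p\<in>cantor_intervals a n. LL a n + 2*t)"
    by (intro sum.cong refl) (auto dest: ci_len)
  also have "\<dots> = card (cantor_intervals a n) * (LL a n + 2*t)" by simp
  also have "\<dots> \<le> 2^n * (LL a n + 2*t)"
    using card LL_nonneg[OF le1, of n] t by (intro mult_right_mono) (auto simp flip: of_nat_power)
  finally show ?thesis .
qed

lemma nbhd_lower:
  assumes t: "t > 0" and L: "LL a n < t"
  shows "measure lebesgue (nbhd (gen_cantor a) t) \<ge> 1 - (\<Sum>k=1..n. a k)"
proof -
  have "cantor_stage a n \<subseteq> nbhd (gen_cantor a) t"
  proof
    fix x assume "x \<in> cantor_stage a n"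
    then obtain p where p: "p \<in> cantor_intervals a n" "x \<in> {fst p..snd p}" unfolding cs_union by auto
    have lK: "fst p \<in> gen_cantor a" using left_in_K[OF nn le1, of "fst p" "snd p" n] p(1) by simp
    have "infdist x (gen_cantor a) \<le> dist x (fst p)" by (rule infdist_le[OF lK])
    also have "\<dots> \<le> snd p - fst p" using p(2) by (simp add: dist_real_def)
    also have "\<dots> < t" using ci_len[OF p(1)] L by simp
    finally show "x \<in> nbhd (gen_cantor a) t" by (simp add: nbhd_def)
  qed
  then have "measure lebesgue (cantor_stage a n) \<le> measure lebesgue (nbhd (gen_cantor a) t)"
    using fmeasurableD[OF cs_lmeas] nbhd_lmeas[OF t] by (rule measure_mono_fmeasurable)
  then show ?thesis using cs_measure[OF nn le1, of n] by linarith
qed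

end



context
  fixes s :: real
  assumes s: "s > 1"
begin

definition "ff j = real (Suc j) powr (-s)"
definition "aa k = real k powr (-s) / zeta_real s"
definition "TT n = (\<Sum>j. real (j+n+1) powr (-s))"

lemma Z_pos: "zeta_real s > 0"
  unfolding zeta_real_def using summ[OF s] by (intro suminf_pos) auto

lemma aa_nn: "aa k \<ge> 0"
  using Z_pos by (simp add: aa_def)

lemma aa_sum: "(\<Sum>k=1..n. aa k) = (\<Sum>j<n. ff j) / zeta_real s"
proof (induction n)
  case 0 then show ?case by simp
next
  case (Suc n)
  have "(\<Sum>k=1..Suc n. aa k) = (\<Sum>k=1..n. aa k) + aa (Suc n)"
    by (simp only: sum.cl_ivl_Suc) simp
  also have "\<dots> = (\<Sum>j<n. ff j) / zeta_real s + ff n / zeta_real s"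
    using Suc by (simp add: aa_def ff_def)
  also have "\<dots> = (\<Sum>j<Suc n. ff j) / zeta_real s"
    by (simp add: add_divide_distrib)
  finally show ?case .
qed

lemma Z_split: "zeta_real s = TT n + (\<Sum>j<n. ff j)"
proof -
  have "zeta_real s = (\<Sum>j. ff (j + n)) + (\<Sum>j<n. ff j)"
    unfolding zeta_real_def ff_def[abs_def] using summ[OF s] by (rule suminf_split_initial_segment)
  also have "(\<Sum>j. ff (j + n)) = TT n" unfolding TT_def ff_def by (simp add: add_ac)
  finally show ?thesis .
qed

lemma R_eq: "1 - (\<Sum>k=1..n. aa k) = TT n / zeta_real s"
proof -
  have "1 - (\<Sum>j<n. ff j) / zeta_real s = (zeta_real s - (\<Sum>j<n. ff j)) / zeta_real s"
    using Z_pos by (simp add: diff_divide_distrib)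
  then show ?thesis unfolding aa_sum using Z_split[of n] by simp
qed

lemma TT_lower: "2 powr (-s) * real (n+1) powr (1-s) \<le> TT n"
  unfolding TT_def by (rule tail_lower[OF s])

lemma TT_upper: "TT n \<le> s/(s-1) * real (n+1) powr (1-s)"
  unfolding TT_def by (rule tail_upper[OF s])

lemma TT_nn: "TT n \<ge> 0"
  using TT_lower[of n] by (smt (verit) powr_ge_zero mult_nonneg_nonneg)

lemma aa_le1: "(\<Sum>k=1..n. aa k) \<le> 1"
  using R_eq[of n] TT_nn[of n] Z_pos by (smt (verit) divide_nonneg_pos)

lemma LL_eq: "LL aa n = TT n / zeta_real s / 2^n"
  unfolding LL_def using R_eq by simp

end



context
  fixes s :: real
  assumes s: "s > 1"
begin

lemma ell_eq: "0 < (t::real) \<Longrightarrow> ln (exp 1 / t) = 1 - ln t"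
  using ln_div[of "exp 1" t] by simp

lemma lower_bd:
  assumes t0: "0 < t" and t1: "t \<le> 1"
  shows "2 powr (-s) * (2 / ln 2) powr (1-s) / zeta_real s * ln (exp 1 / t) powr (1-s)
         \<le> measure lebesgue (nbhd (gen_cantor (aa s)) t)"
proof -
  define u where "u = - ln t"
  have u0: "u \<ge> 0" using t0 t1 by (simp add: u_def)
  have tu: "t = exp (-u)" using t0 by (simp add: u_def)
  define ell where "ell = ln (exp 1 / t)"
  have lu: "ell = 1 + u" using ell_eq[OF t0] by (simp add: ell_def u_def)
  have ln2: "0 < ln (2::real)" "ln (2::real) < 1" using ln_2_less_1 by auto
  define n where "n = nat \<lfloor>u / ln 2\<rfloor> + 1"
  have fl0: "\<lfloor>u / ln 2\<rfloor> \<ge> 0" using u0 ln2 by simp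
  have n_gt: "real n > u / ln 2"
    unfolding n_def using fl0 by (simp add: of_nat_nat) linarith
  have n_le: "real n \<le> u / ln 2 + 1"
    unfolding n_def using fl0 by (simp add: of_nat_nat)
  have "exp u < exp (real n * ln 2)" using n_gt ln2 by (simp add: field_simps)
  also have "exp (real n * ln 2) = 2^n" by (simp add: exp_of_nat_mult)
  finally have "t * exp u < t * 2^n" using t0 by simp
  moreover have "t * exp u = 1" using tu by (simp add: exp_minus)
  ultimately have "1 / 2^n < t" by (simp add: field_simps)
  moreover have "LL (aa s) n \<le> 1 / 2^n"
  proof -
    have "(\<Sum>k=1..n. aa s k) \<ge> 0" using aa_nn[OF s] by (simp add: sum_nonneg)
    then have "TT s n / zeta_real s \<le> 1" using R_eq[OF s, of n] by linarith
    then have "TT s n / zeta_real s / 2^n \<le> 1 / 2^n" by (rule divide_right_mono) simp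
    then show ?thesis using LL_eq[OF s, of n] by simp
  qed
  ultimately have L: "LL (aa s) n < t" by linarith
  have meas: "measure lebesgue (nbhd (gen_cantor (aa s)) t) \<ge> TT s n / zeta_real s"
    using nbhd_lower[OF aa_nn[OF s] aa_le1[OF s] t0 L] R_eq[OF s, of n] by simp
  have "real (n+1) \<le> 2 / ln 2 * ell"
  proof -
    have "1 \<le> 1 / ln (2::real)" using ln2 by simp
    have e: "2 / ln 2 * (1 + u) - (u / ln 2 + 2) = (2 - 2 * ln 2 + u) / ln 2"
      using ln2 by (simp add: field_simps)
    have "(2 - 2 * ln 2 + u) / ln 2 \<ge> 0" using ln2 u0 by simp
    then have "u / ln 2 + 2 \<le> 2 / ln 2 * (1 + u)" using e by linarith
    then show ?thesis using n_le lu by simp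
  qed
  then have "(2 / ln 2 * ell) powr (1-s) \<le> real (n+1) powr (1-s)"
    using s by (intro powr_mono2') auto
  moreover have "(2 / ln 2 * ell) powr (1-s) = (2 / ln 2) powr (1-s) * ell powr (1-s)" 
    by (rule powr_mult)
  ultimately have "2 powr (-s) * ((2 / ln 2) powr (1-s) * ell powr (1-s)) \<le> 2 powr (-s) * real (n+1) powr (1-s)"
    by (intro mult_left_mono) auto
  also have "\<dots> \<le> TT s n" by (rule TT_lower[OF s])
  finally have "2 powr (-s) * (2 / ln 2) powr (1-s) * ell powr (1-s) / zeta_real s \<le> TT s n / zeta_real s"
    using Z_pos[OF s] by (simp add: divide_right_mono mult.assoc)
  then show ?thesis using meas unfolding ell_def by (simp add: field_simps)
qed

lemma exp_bound:
  assumes u0: "u \<ge> 0"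
  shows "exp (-u/2) \<le> exp ((s-1) * ln (2*(s-1)) + 1/2) * (1+u) powr (1-s)"
proof -
  define M where "M = 2*(s-1)"
  have M0: "M > 0" using s by (simp add: M_def)
  have "ln ((1+u)/M) \<le> (1+u)/M - 1" using M0 u0 by (intro ln_le_minus_one) auto
  then have "ln (1+u) - ln M \<le> (1+u)/M" using M0 u0 by (simp add: ln_div)
  then have "(s-1) * (ln (1+u) - ln M) \<le> (s-1) * ((1+u)/M)" using s by (intro mult_left_mono) auto
  also have "(s-1) * ((1+u)/M) = (1+u)/2" using s by (simp add: M_def field_simps)
  finally have key: "-u/2 \<le> (s-1) * ln M + 1/2 + (1-s) * ln (1+u)" by (simp add: algebra_simps)
  have "exp (-u/2) \<le> exp ((s-1) * ln M + 1/2 + (1-s) * ln (1+u))" using key by simp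
  also have "\<dots> = exp ((s-1) * ln M + 1/2) * (1+u) powr (1-s)"
    using u0 by (simp add: powr_def exp_add mult.commute)
  finally show ?thesis by (simp add: M_def)
qed

lemma upper_bd:
  assumes t0: "0 < t" and t1: "t \<le> 1"
  shows "measure lebesgue (nbhd (gen_cantor (aa s)) t)
     \<le> (s/(s-1) * 3 powr (s-1) / zeta_real s + 2 * exp ((s-1) * ln (2*(s-1)) + 1/2)) * ln (exp 1 / t) powr (1-s)"
proof -
  define u where "u = - ln t"
  have u0: "u \<ge> 0" using t0 t1 by (simp add: u_def)
  have tu: "t = exp (-u)" using t0 by (simp add: u_def)
  define ell where "ell = ln (exp 1 / t)"
  have lu: "ell = 1 + u" using ell_eq[OF t0] by (simp add: ell_def u_def)
  have ln2: "0 < ln (2::real)" "ln (2::real) < 1" using ln_2_less_1 by auto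
  define n where "n = nat \<lfloor>u / (2 * ln 2)\<rfloor>"
  have fl0: "\<lfloor>u / (2 * ln 2)\<rfloor> \<ge> 0" using u0 ln2 by simp
  have n_gt: "real n > u / (2 * ln 2) - 1"
    unfolding n_def using fl0 by (simp add: of_nat_nat)
  have n_le: "real n \<le> u / (2 * ln 2)"
    unfolding n_def using fl0 by (simp add: of_nat_nat)
  have "(2::real)^n = exp (real n * ln 2)" by (simp add: exp_of_nat_mult)
  also have "\<dots> \<le> exp (u/2)" using n_le ln2 by (simp add: field_simps)
  finally have pow: "(2::real)^n \<le> exp (u/2)" .
  define E where "E = exp ((s-1) * ln (2*(s-1)) + 1/2)"
  have "2^n * (2*t) \<le> exp (u/2) * (2 * t)" using pow t0 by (intro mult_right_mono) auto
  also have "exp (u/2) * (2 * t) = 2 * exp (-u/2)" using tu by (simp add: exp_minus field_simps flip: exp_add)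
  also have "\<dots> \<le> 2 * E * ell powr (1-s)" using exp_bound[OF u0] lu by (simp add: E_def)
  finally have part2: "2^n * (2*t) \<le> 2 * E * ell powr (1-s)" .
  have "2^n * LL (aa s) n = TT s n / zeta_real s" using LL_eq[OF s, of n] by simp
  also have "\<dots> \<le> s/(s-1) * real (n+1) powr (1-s) / zeta_real s"
    by (rule divide_right_mono[OF TT_upper[OF s, of n]]) (use Z_pos[OF s] in simp)
  also have "real (n+1) powr (1-s) \<le> (ell/3) powr (1-s)"
  proof -
    have "u / (2 * ln 2) \<ge> u / 2" using u0 ln2 by (intro divide_left_mono) auto
    then have "ell / 3 \<le> real (n+1)" using n_gt lu by simp
    moreover have "ell / 3 > 0" using lu u0 by simp
    ultimately show ?thesis using s by (intro powr_mono2') auto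
  qed
  also have "(ell/3) powr (1-s) = 3 powr (s-1) * ell powr (1-s)"
  proof -
    have "(ell/3) powr (1-s) = ell powr (1-s) / 3 powr (1-s)" by (rule powr_divide)
    also have "1 / (3::real) powr (1-s) = 3 powr (s-1)" by (simp add: powr_minus_divide[symmetric] )
    ultimately show ?thesis by (metis times_divide_eq_right mult.commute mult_1)
  qed
  finally have part1: "2^n * LL (aa s) n \<le> s/(s-1) * (3 powr (s-1) * ell powr (1-s)) / zeta_real s"
    using s Z_pos[OF s] by (simp add: divide_right_mono mult_left_mono)
  have "measure lebesgue (nbhd (gen_cantor (aa s)) t) \<le> 2^n * (LL (aa s) n + 2*t)"
    by (rule nbhd_upper[OF aa_nn[OF s] aa_le1[OF s] t0])
  also have "\<dots> = 2^n * LL (aa s) n + 2^n * (2*t)" by (simp add: algebra_simps)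
  also have "\<dots> \<le> s/(s-1) * (3 powr (s-1) * ell powr (1-s)) / zeta_real s + 2 * E * ell powr (1-s)"
    using part1 part2 by linarith
  also have "\<dots> = (s/(s-1) * 3 powr (s-1) / zeta_real s + 2 * E) * ell powr (1-s)"
    by (simp add: field_simps)
  finally show ?thesis unfolding E_def ell_def .
qed

end


theorem lemma4p4:
  fixes s :: real
  assumes "s > 1"
  shows "\<exists>c1 c2. c1 > 0 \<and> c2 > 0 \<and>
    (\<forall>t \<in> {0<..1}.
       c1 / (ln (exp 1 / t)) powr (s - 1)
         \<le> measure lebesgue (nbhd (gen_cantor (\<lambda>k. real k powr (- s) / zeta_real s)) t)
     \<and> measure lebesgue (nbhd (gen_cantor (\<lambda>k. real k powr (- s) / zeta_real s)) t)
         \<le> c2 / (ln (exp 1 / t)) powr (s - 1))"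
proof -
  have s: "s > 1" by (rule assms)
  have fa: "(\<lambda>k. real k powr (- s) / zeta_real s) = aa s" by (simp add: fun_eq_iff aa_def[OF s])
  define c1 where "c1 = 2 powr (-s) * (2 / ln 2) powr (1-s) / zeta_real s"
  define c2 where "c2 = s/(s-1) * 3 powr (s-1) / zeta_real s + 2 * exp ((s-1) * ln (2*(s-1)) + 1/2)"
  have Z: "zeta_real s > 0" by (rule Z_pos[OF s])
  have ln2: "0 < ln (2::real)" by simp
  have c1: "c1 > 0" unfolding c1_def using Z ln2 by simp
  have c2: "c2 > 0" unfolding c2_def using Z s by (intro add_pos_pos) auto
  have conv: "c / ln (exp 1 / t) powr (s - 1) = c * ln (exp 1 / t) powr (1 - s)" if "0 < t" "t \<le> 1" for c t :: real
  proof -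
    have "ln (exp 1 / t) = 1 - ln t" using ell_eq[OF s that(1)] .
    moreover have "ln t \<le> 0" using that by simp
    ultimately have pos: "ln (exp 1 / t) > 0" by linarith
    have "ln (exp 1 / t) powr (1 - s) = inverse (ln (exp 1 / t) powr (s - 1))"
      using powr_minus[of "ln (exp 1 / t)" "s - 1"] by simp
    then show ?thesis by (simp add: divide_inverse)
  qed
  show ?thesis
  proof (intro exI conjI ballI)
    show "c1 > 0" "c2 > 0" using c1 c2 .
  next
    fix t :: real assume "t \<in> {0<..1}"
    then have t0: "0 < t" and t1: "t \<le> 1" by auto
    show "c1 / (ln (exp 1 / t)) powr (s - 1)
         \<le> measure lebesgue (nbhd (gen_cantor (\<lambda>k. real k powr (- s) / zeta_real s)) t)"
      unfolding fa conv[OF t0 t1] c1_def using lower_bd[OF s t0 t1] .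
  next
    fix t :: real assume "t \<in> {0<..1}"
    then have t0: "0 < t" and t1: "t \<le> 1" by auto
    show "measure lebesgue (nbhd (gen_cantor (\<lambda>k. real k powr (- s) / zeta_real s)) t)
         \<le> c2 / (ln (exp 1 / t)) powr (s - 1)"
      unfolding fa conv[OF t0 t1] c2_def using upper_bd[OF s t0 t1] .
  qed
qed

end
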